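(* Let $u$ be a drift function and $\alpha>0$. Then for every $f\in\mathcal E^1_u$ and every $x\in\mathbf X$, \[\frac{1}{n^{1+\alpha}}f(X_n)\xrightarrow[n\to\infty]{}0\quad\mathbb P_x\text{-a.s. and in }\mathrm L^1(\mathbb P_x).\]
   Context: $(X_n)$ Markov chain on a complete separable metric space $\mathbf X$, $\mathbb P_x$ its law from $x$, $Pf(x)=\mathbb E_xf(X_1)$. $\tau$ is a $\theta$-compatible stopping time ($\mathbb P_x(\tau=0)=0$ and $\mathbb P_x$-a.s. $\tau\ge2\Rightarrow\tau\circ\theta=\tau-1$) with $\mathbb E_x\tau<\infty$ for all $x$; $Qf(x)=\mathbb E_x[f(X_\tau)\mathbf 1_{\tau<\infty}]$. A drift function is a Borel $u:\mathbf X\to[1,\infty)$ such that $u-Pu$ is bounded below and $Qu$, $x\mapsto\mathbb E_x\tau/u(x)$ and $P(u-Pu+B_u)/(u-Pu+B_u)$ are bounded on $\mathbf X$, where $B_u=\sup(Pu-u)+1$. For Borel $v\ge1$, $\mathcal F^p_v$ is the space of Borel $f$ with $\sup|f|^p/v<\infty$; $\mathcal E^p_u:=\mathcal F^p_{u-Pu+B_u}$. *)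

theory Defs
  imports "HOL-Probability.Probability"
begin

text \<open>Canonical setting: the path space is the stream space over the Borel
  sigma-algebra of X; X_n(omega) = omega !! n and the shift theta is stl.\<close>

abbreviation path_space :: "'a::topological_space stream measure" where
  "path_space \<equiv> stream_space borel"

text \<open>Px x is the law of the Markov chain with transition kernel K started at x.
  The recursive equation characterises it uniquely (Ionescu-Tulcea).\<close>
definition markov_chain_law ::
  "('a::polish_space \<Rightarrow> 'a measure) \<Rightarrow> ('a \<Rightarrow> 'a stream measure) \<Rightarrow> bool" where
  "markov_chain_law K Px \<longleftrightarrow>
     K \<in> borel \<rightarrow>\<^sub>M prob_algebra borel \<and>
     Px \<in> borel \<rightarrow>\<^sub>M prob_algebra path_space \<and>
     (\<forall>x. Px x = K x \<bind> (\<lambda>y. distr (Px y) path_space (\<lambda>\<omega>. x ## \<omega>)))"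

definition nat_filtration :: "enat \<Rightarrow> 'a::topological_space stream measure" where
  "nat_filtration t = (case t of
      enat n \<Rightarrow> vimage_algebra (space path_space) (\<lambda>\<omega>. \<lambda>i\<in>{..n}. \<omega> !! i)
                  (PiM {..n} (\<lambda>_. borel))
    | \<infinity> \<Rightarrow> path_space)"

definition Pop :: "('a::polish_space \<Rightarrow> 'a stream measure) \<Rightarrow> ('a \<Rightarrow> real) \<Rightarrow> 'a \<Rightarrow> real" where
  "Pop Px f x = (\<integral>\<omega>. f (\<omega> !! 1) \<partial>Px x)"

definition Qop :: "('a::polish_space \<Rightarrow> 'a stream measure) \<Rightarrow> ('a stream \<Rightarrow> enat) \<Rightarrow> ('a \<Rightarrow> real) \<Rightarrow> 'a \<Rightarrow> ennreal" where
  "Qop Px \<tau> f x = (\<integral>\<^sup>+\<omega>. (if \<tau> \<omega> < \<infinity> then ennreal (f (\<omega> !! the_enat (\<tau> \<omega>))) else 0) \<partial>Px x)"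

definition theta_compatible :: "('a::polish_space \<Rightarrow> 'a stream measure) \<Rightarrow> ('a stream \<Rightarrow> enat) \<Rightarrow> bool" where
  "theta_compatible Px \<tau> \<longleftrightarrow>
     stopping_time nat_filtration \<tau> \<and>
     (\<forall>x. \<P>(\<omega> in Px x. \<tau> \<omega> = 0) = 0) \<and>
     (\<forall>x. AE \<omega> in Px x. \<tau> \<omega> \<ge> 2 \<longrightarrow> \<tau> (stl \<omega>) = \<tau> \<omega> - 1)"

definition Bconst :: "('a::polish_space \<Rightarrow> 'a stream measure) \<Rightarrow> ('a \<Rightarrow> real) \<Rightarrow> real" where
  "Bconst Px u = (SUP x. Pop Px u x - u x) + 1"

definition wfun :: "('a::polish_space \<Rightarrow> 'a stream measure) \<Rightarrow> ('a \<Rightarrow> real) \<Rightarrow> 'a \<Rightarrow> real" where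
  "wfun Px u x = u x - Pop Px u x + Bconst Px u"

definition drift_function ::
  "('a::polish_space \<Rightarrow> 'a stream measure) \<Rightarrow> ('a stream \<Rightarrow> enat) \<Rightarrow> ('a \<Rightarrow> real) \<Rightarrow> bool" where
  "drift_function Px \<tau> u \<longleftrightarrow>
     u \<in> borel_measurable borel \<and> (\<forall>x. u x \<ge> 1) \<and>
     (\<forall>x. integrable (Px x) (\<lambda>\<omega>. u (\<omega> !! 1))) \<and>
     bdd_below (range (\<lambda>x. u x - Pop Px u x)) \<and>
     (\<exists>C. \<forall>x. Qop Px \<tau> u x \<le> ennreal C) \<and>
     (\<exists>C. \<forall>x. enn2real (\<integral>\<^sup>+\<omega>. ennreal_of_enat (\<tau> \<omega>) \<partial>Px x) / u x \<le> C) \<and>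
     (\<exists>C. \<forall>x. (\<integral>\<^sup>+\<omega>. ennreal (wfun Px u (\<omega> !! 1)) \<partial>Px x) \<le> ennreal (C * wfun Px u x))"

definition Fspace :: "real \<Rightarrow> ('a::topological_space \<Rightarrow> real) \<Rightarrow> ('a \<Rightarrow> real) set" where
  "Fspace p v = {f. f \<in> borel_measurable borel \<and> (\<exists>C. \<forall>x. \<bar>f x\<bar> powr p / v x \<le> C)}"

definition Espace :: "real \<Rightarrow> ('a::polish_space \<Rightarrow> 'a stream measure) \<Rightarrow> ('a \<Rightarrow> real) \<Rightarrow> ('a \<Rightarrow> real) set" where
  "Espace p Px u = Fspace p (wfun Px u)"

end

theory Submission
  imports Defs "HOL-Real_Asymp.Real_Asymp"
begin


lemma mcl_facts:
  assumes "markov_chain_law K Px"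
  shows "K \<in> borel \<rightarrow>\<^sub>M prob_algebra borel" "Px \<in> borel \<rightarrow>\<^sub>M prob_algebra path_space"
    "prob_space (K x)" "sets (K x) = sets borel" "prob_space (Px x)" "sets (Px x) = sets path_space"
    "Px x = K x \<bind> (\<lambda>y. distr (Px y) path_space (\<lambda>\<omega>. x ## \<omega>))"
proof -
  show K: "K \<in> borel \<rightarrow>\<^sub>M prob_algebra borel" and P: "Px \<in> borel \<rightarrow>\<^sub>M prob_algebra path_space"
    using assms unfolding markov_chain_law_def by blast+
  show "Px x = K x \<bind> (\<lambda>y. distr (Px y) path_space (\<lambda>\<omega>. x ## \<omega>))"
    using assms unfolding markov_chain_law_def by blast
  have "K x \<in> space (prob_algebra borel)" using measurable_space[OF K] by auto
  then show "prob_space (K x)" "sets (K x) = sets borel" by (auto simp: space_prob_algebra)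
  have "Px x \<in> space (prob_algebra path_space)" using measurable_space[OF P] by auto
  then show "prob_space (Px x)" "sets (Px x) = sets path_space" by (auto simp: space_prob_algebra)
qed

lemma J_step:
  fixes h :: "'a::polish_space \<Rightarrow> ennreal"
  assumes mc: "markov_chain_law K Px" and h[measurable]: "h \<in> borel_measurable borel"
  shows "(\<integral>\<^sup>+\<omega>. h (\<omega> !! Suc k) \<partial>Px x) = (\<integral>\<^sup>+y. (\<integral>\<^sup>+\<omega>. h (\<omega> !! k) \<partial>Px y) \<partial>K x)"
    and "(\<integral>\<^sup>+\<omega>. h (\<omega> !! 0) \<partial>Px x) = h x"
proof -
  note F = mcl_facts[OF mc]
  have Pm: "Px \<in> K x \<rightarrow>\<^sub>M prob_algebra path_space"
    using F(2) by (subst measurable_cong_sets[OF F(4) refl]) 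
  have N: "(\<lambda>y. distr (Px y) path_space (\<lambda>\<omega>. x ## \<omega>)) \<in> K x \<rightarrow>\<^sub>M subprob_algebra path_space"
    by (intro measurable_prob_algebraD measurable_distr_prob_space2[OF Pm]) measurable
  have gen: "(\<integral>\<^sup>+\<omega>. g \<omega> \<partial>Px x) = (\<integral>\<^sup>+y. (\<integral>\<^sup>+\<omega>. g (x ## \<omega>) \<partial>Px y) \<partial>K x)"
    if g[measurable]: "g \<in> borel_measurable path_space" for g
  proof -
    have "(\<integral>\<^sup>+\<omega>. g \<omega> \<partial>Px x) = (\<integral>\<^sup>+y. (\<integral>\<^sup>+\<omega>. g \<omega> \<partial>distr (Px y) path_space (\<lambda>\<omega>. x ## \<omega>)) \<partial>K x)"
      by (subst F(7), rule nn_integral_bind[OF g N])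
    also have "\<dots> = (\<integral>\<^sup>+y. (\<integral>\<^sup>+\<omega>. g (x ## \<omega>) \<partial>Px y) \<partial>K x)"
    proof (rule nn_integral_cong)
      fix y
      have "(\<lambda>\<omega>. x ## \<omega>) \<in> Px y \<rightarrow>\<^sub>M path_space"
        by (subst measurable_cong_sets[OF mcl_facts(6)[OF mc] refl]) measurable
      then show "(\<integral>\<^sup>+\<omega>. g \<omega> \<partial>distr (Px y) path_space (\<lambda>\<omega>. x ## \<omega>)) = (\<integral>\<^sup>+\<omega>. g (x ## \<omega>) \<partial>Px y)"
        by (rule nn_integral_distr) measurable
    qed
    finally show ?thesis .
  qed
  show "(\<integral>\<^sup>+\<omega>. h (\<omega> !! Suc k) \<partial>Px x) = (\<integral>\<^sup>+y. (\<integral>\<^sup>+\<omega>. h (\<omega> !! k) \<partial>Px y) \<partial>K x)"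
    by (subst gen[OF measurable_compose[OF measurable_snth h]]) simp_all
  have "(\<integral>\<^sup>+\<omega>. h (\<omega> !! 0) \<partial>Px x) = (\<integral>\<^sup>+y. (\<integral>\<^sup>+\<omega>. h x \<partial>Px y) \<partial>K x)"
    by (subst gen[OF measurable_compose[OF measurable_snth h]]) simp_all
  also have "\<dots> = (\<integral>\<^sup>+y. h x \<partial>K x)"
    by (rule nn_integral_cong) (simp add: prob_space.emeasure_space_1[OF mcl_facts(5)[OF mc]])
  also have "\<dots> = h x" by (simp add: prob_space.emeasure_space_1[OF mcl_facts(3)[OF mc]])
  finally show "(\<integral>\<^sup>+\<omega>. h (\<omega> !! 0) \<partial>Px x) = h x" .
qed

lemma K_int_meas:
  fixes h :: "'a::polish_space \<Rightarrow> ennreal"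
  assumes mc: "markov_chain_law K Px" and h: "h \<in> borel_measurable borel"
  shows "(\<lambda>y. \<integral>\<^sup>+z. h z \<partial>K y) \<in> borel_measurable borel"
  by (rule measurable_compose[OF measurable_prob_algebraD[OF mcl_facts(1)[OF mc]] nn_integral_measurable_subprob_algebra[OF h]])

lemma J_one:
  fixes h :: "'a::polish_space \<Rightarrow> ennreal"
  assumes mc: "markov_chain_law K Px" and h: "h \<in> borel_measurable borel"
  shows "(\<integral>\<^sup>+\<omega>. h (\<omega> !! 1) \<partial>Px y) = (\<integral>\<^sup>+z. h z \<partial>K y)"
  using J_step(1)[OF mc h, where k=0 and x=y] J_step(2)[OF mc h] by simp

lemma J_one_meas:
  fixes h :: "'a::polish_space \<Rightarrow> ennreal"
  assumes mc: "markov_chain_law K Px" and h: "h \<in> borel_measurable borel"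
  shows "(\<lambda>y. \<integral>\<^sup>+\<omega>. h (\<omega> !! 1) \<partial>Px y) \<in> borel_measurable borel"
  unfolding J_one[OF mc h] by (rule K_int_meas[OF mc h])

lemma J_shift:
  fixes h :: "'a::polish_space \<Rightarrow> ennreal"
  assumes mc: "markov_chain_law K Px" and h: "h \<in> borel_measurable borel"
  shows "(\<integral>\<^sup>+\<omega>. h (\<omega> !! Suc k) \<partial>Px x) = (\<integral>\<^sup>+\<omega>. (\<integral>\<^sup>+\<omega>'. h (\<omega>' !! 1) \<partial>Px (\<omega> !! k)) \<partial>Px x)"
proof (induction k arbitrary: x)
  case 0
  then show ?case using J_step(2)[OF mc J_one_meas[OF mc h]] by simp
next
  case (Suc k)
  show ?case
    by (simp only: J_step(1)[OF mc h, where k="Suc k"] Suc J_step(1)[OF mc J_one_meas[OF mc h], where k=k])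
qed

lemma comp_meas_Px:
  assumes mc: "markov_chain_law K Px" and g: "g \<in> borel_measurable borel"
  shows "(\<lambda>\<omega>. g (\<omega> !! k)) \<in> borel_measurable (Px x)"
  by (subst measurable_cong_sets[OF mcl_facts(6)[OF mc] refl]) (rule measurable_compose[OF measurable_snth g])

lemma drift_facts:
  fixes u :: "'a::polish_space \<Rightarrow> real"
  assumes mc: "markov_chain_law K Px" and dr: "drift_function Px \<tau> u"
  shows "\<And>y. wfun Px u y \<ge> 1"
    and "wfun Px u \<in> borel_measurable borel"
    and "\<And>x n. (\<Sum>k<n. \<integral>\<^sup>+\<omega>. ennreal (wfun Px u (\<omega> !! k)) \<partial>Px x)
            \<le> ennreal (u x) + of_nat n * ennreal (max (Bconst Px u) 0)"
proof -
  note D = dr[unfolded drift_function_def]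
  have um[measurable]: "u \<in> borel_measurable borel" using D by (elim conjE)
  have u1: "\<And>x. u x \<ge> 1" using D by (elim conjE) simp
  have ui: "\<And>x. integrable (Px x) (\<lambda>\<omega>. u (\<omega> !! 1))" using D by (elim conjE) simp
  have bb: "bdd_below (range (\<lambda>x. u x - Pop Px u x))" using D by (elim conjE) simp
  have ba: "bdd_above (range (\<lambda>x. Pop Px u x - u x))"
  proof -
    obtain m where "\<And>x. m \<le> u x - Pop Px u x" using bb unfolding bdd_below_def by blast
    then have "\<And>x. Pop Px u x - u x \<le> - m" by (smt (verit))
    then show ?thesis by (intro bdd_aboveI2) 
  qed
  show W1: "wfun Px u y \<ge> 1" for y
  proof -
    have "Pop Px u y - u y \<le> (SUP x. Pop Px u x - u x)"
      by (rule cSUP_upper[OF _ ba]) simp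
    then show ?thesis unfolding wfun_def Bconst_def by simp
  qed
  let ?un = "\<lambda>y. ennreal (u y)"
  have umn[measurable]: "?un \<in> borel_measurable borel" by measurable
  have Pnn: "(\<integral>\<^sup>+\<omega>. ?un (\<omega> !! 1) \<partial>Px y) = ennreal (Pop Px u y)" for y
    unfolding Pop_def
    by (rule nn_integral_eq_integral[OF ui]) (simp add: order_trans[OF _ u1])
  have Pop_eq: "Pop Px u = (\<lambda>y. enn2real (\<integral>\<^sup>+\<omega>. ?un (\<omega> !! 1) \<partial>Px y))"
  proof
    fix y
    have "Pop Px u y \<ge> 0" unfolding Pop_def
      by (rule integral_nonneg_AE) (simp add: order_trans[OF _ u1])
    then show "Pop Px u y = enn2real (\<integral>\<^sup>+\<omega>. ?un (\<omega> !! 1) \<partial>Px y)" by (subst Pnn) simp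
  qed
  have Pm[measurable]: "Pop Px u \<in> borel_measurable borel"
    unfolding Pop_eq by (rule borel_measurable_enn2real[OF J_one_meas[OF mc umn]])
  show Wm[measurable]: "wfun Px u \<in> borel_measurable borel"
    unfolding wfun_def[abs_def] by measurable
  let ?Wn = "\<lambda>y. ennreal (wfun Px u y)"
  let ?Bp = "ennreal (max (Bconst Px u) 0)"
  have Wnm[measurable]: "?Wn \<in> borel_measurable borel" by measurable
  have pt: "?Wn y + (\<integral>\<^sup>+\<omega>. ?un (\<omega> !! 1) \<partial>Px y) \<le> ?un y + ?Bp" for y
  proof -
    have P0: "Pop Px u y \<ge> 0" unfolding Pop_def
      by (rule integral_nonneg_AE) (simp add: order_trans[OF _ u1])
    have "?Wn y + ennreal (Pop Px u y) = ennreal (wfun Px u y + Pop Px u y)"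
      using W1[of y] P0 by (simp add: ennreal_plus)
    also have "\<dots> \<le> ennreal (u y + max (Bconst Px u) 0)"
      by (rule ennreal_leI) (simp add: wfun_def)
    also have "\<dots> = ?un y + ?Bp" using u1[of y] by (simp add: ennreal_plus)
    finally show ?thesis by (subst Pnn) simp
  qed
  have step: "(\<integral>\<^sup>+\<omega>. ?Wn (\<omega> !! k) \<partial>Px x) + (\<integral>\<^sup>+\<omega>. ?un (\<omega> !! Suc k) \<partial>Px x)
      \<le> (\<integral>\<^sup>+\<omega>. ?un (\<omega> !! k) \<partial>Px x) + ?Bp" for k x
  proof -
    have "(\<integral>\<^sup>+\<omega>. ?Wn (\<omega> !! k) \<partial>Px x) + (\<integral>\<^sup>+\<omega>. ?un (\<omega> !! Suc k) \<partial>Px x)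
       = (\<integral>\<^sup>+\<omega>. ?Wn (\<omega> !! k) \<partial>Px x) + (\<integral>\<^sup>+\<omega>. (\<integral>\<^sup>+\<omega>'. ?un (\<omega>' !! 1) \<partial>Px (\<omega> !! k)) \<partial>Px x)"
      by (simp only: J_shift[OF mc umn])
    also have "\<dots> = (\<integral>\<^sup>+\<omega>. ?Wn (\<omega> !! k) + (\<integral>\<^sup>+\<omega>'. ?un (\<omega>' !! 1) \<partial>Px (\<omega> !! k)) \<partial>Px x)"
      by (rule nn_integral_add[symmetric, OF comp_meas_Px[OF mc Wnm] comp_meas_Px[OF mc J_one_meas[OF mc umn]]])
    also have "\<dots> \<le> (\<integral>\<^sup>+\<omega>. ?un (\<omega> !! k) + ?Bp \<partial>Px x)"
      by (rule nn_integral_mono) (rule pt)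
    also have "\<dots> = (\<integral>\<^sup>+\<omega>. ?un (\<omega> !! k) \<partial>Px x) + (\<integral>\<^sup>+\<omega>. ?Bp \<partial>Px x)"
      by (rule nn_integral_add[OF comp_meas_Px[OF mc umn]]) simp
    also have "(\<integral>\<^sup>+\<omega>. ?Bp \<partial>Px x) = ?Bp"
      by (simp add: prob_space.emeasure_space_1[OF mcl_facts(5)[OF mc]])
    finally show ?thesis .
  qed
  have ind: "(\<Sum>k<n. \<integral>\<^sup>+\<omega>. ?Wn (\<omega> !! k) \<partial>Px x) + (\<integral>\<^sup>+\<omega>. ?un (\<omega> !! n) \<partial>Px x)
            \<le> ?un x + of_nat n * ?Bp" for x n
  proof (induction n)
    case 0
    then show ?case using J_step(2)[OF mc umn, of x] by simp
  next
    case (Suc n)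
    have "(\<Sum>k<Suc n. \<integral>\<^sup>+\<omega>. ?Wn (\<omega> !! k) \<partial>Px x) + (\<integral>\<^sup>+\<omega>. ?un (\<omega> !! Suc n) \<partial>Px x)
       = (\<Sum>k<n. \<integral>\<^sup>+\<omega>. ?Wn (\<omega> !! k) \<partial>Px x) + ((\<integral>\<^sup>+\<omega>. ?Wn (\<omega> !! n) \<partial>Px x) + (\<integral>\<^sup>+\<omega>. ?un (\<omega> !! Suc n) \<partial>Px x))"
      by (simp add: add.assoc)
    also have "\<dots> \<le> (\<Sum>k<n. \<integral>\<^sup>+\<omega>. ?Wn (\<omega> !! k) \<partial>Px x) + ((\<integral>\<^sup>+\<omega>. ?un (\<omega> !! n) \<partial>Px x) + ?Bp)"
      by (rule add_left_mono[OF step])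
    also have "\<dots> = ((\<Sum>k<n. \<integral>\<^sup>+\<omega>. ?Wn (\<omega> !! k) \<partial>Px x) + (\<integral>\<^sup>+\<omega>. ?un (\<omega> !! n) \<partial>Px x)) + ?Bp"
      by (simp add: add.assoc)
    also have "\<dots> \<le> (?un x + of_nat n * ?Bp) + ?Bp"
      by (rule add_right_mono[OF Suc])
    also have "\<dots> = ?un x + of_nat (Suc n) * ?Bp"
      by (simp add: distrib_right add.assoc)
    finally show ?case .
  qed
  show "(\<Sum>k<n. \<integral>\<^sup>+\<omega>. ennreal (wfun Px u (\<omega> !! k)) \<partial>Px x)
            \<le> ennreal (u x) + of_nat n * ennreal (max (Bconst Px u) 0)" for x n
    using order_trans[OF add_increasing2[OF zero_le order.refl] ind[of x n]] by simp
qed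



lemma abel_aux:
  fixes c x :: "nat \<Rightarrow> real"
  assumes dec: "\<And>n. c (Suc n) \<le> c n" and c0: "\<And>n. c n \<ge> 0" and x0: "\<And>n. x n \<ge> 0"
    and S: "\<And>N. (\<Sum>n<N. x n) \<le> A + B * real N"
  shows "(\<Sum>n<N. c n * x n) + c N * (A + B * real N - (\<Sum>n<N. x n)) \<le> A * c 0 + B * (\<Sum>n<N. c n)"
proof (induction N)
  case 0
  then show ?case by (simp add: mult.commute)
next
  case (Suc N)
  define D where "D = A + B * real (Suc N) - (\<Sum>n<Suc N. x n)"
  have D0: "D \<ge> 0" using S[of "Suc N"] unfolding D_def by (simp add: algebra_simps)
  have "c (Suc N) * D \<le> c N * D" by (rule mult_right_mono[OF dec D0])
  moreover have e: "A + B * real N - (\<Sum>n<N. x n) = D + x N - B" unfolding D_def by (simp add: algebra_simps)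
  moreover have "c N * (A + B * real N - (\<Sum>n<N. x n)) = c N * D + c N * x N - c N * B"
    unfolding e by (simp add: algebra_simps)
  moreover have "c (Suc N) * (A + B * real (Suc N) - (\<Sum>n<Suc N. x n)) = c (Suc N) * D" unfolding D_def ..
  ultimately show ?case using Suc by (simp only: sum.lessThan_Suc) (simp add: algebra_simps)
qed

lemma abel:
  fixes c x :: "nat \<Rightarrow> real"
  assumes dec: "\<And>n. c (Suc n) \<le> c n" and c0: "\<And>n. c n \<ge> 0" and x0: "\<And>n. x n \<ge> 0"
    and S: "\<And>N. (\<Sum>n<N. x n) \<le> A + B * real N"
  shows "(\<Sum>n<N. c n * x n) \<le> A * c 0 + B * (\<Sum>n<N. c n)"
proof -
  have "c N * (A + B * real N - (\<Sum>n<N. x n)) \<ge> 0" using S[of N] c0[of N] by simp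
  then show ?thesis using abel_aux[of c x A B N, OF assms] by linarith
qed

lemma powr_cmp:
  fixes p :: real assumes "p > 0" "n \<ge> 1"
  shows "1 / real n powr p \<le> 2 powr p * (1 / real (Suc n) powr p)"
proof -
  have "real (Suc n) powr p \<le> (2 * real n) powr p"
    using assms by (intro powr_mono2) auto
  also have "\<dots> = 2 powr p * real n powr p" by (simp add: powr_mult)
  finally have "real (Suc n) powr p \<le> 2 powr p * real n powr p" .
  moreover have "real n powr p > 0" "real (Suc n) powr p > 0" using assms by auto
  ultimately show ?thesis by (simp add: field_simps)
qed

lemma lim_aux:
  fixes \<alpha> C A B :: real assumes "\<alpha> > 0"
  shows "(\<lambda>n. C * (A + real (Suc n) * B) / real n powr (1 + \<alpha>)) \<longlonglongrightarrow> 0"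
  using assms by real_asymp

lemma csum:
  fixes \<alpha> :: real assumes "\<alpha> > 0"
  shows "summable (\<lambda>n. 1 / real (Suc n) powr (1 + \<alpha>))"
proof -
  have "summable (\<lambda>n. real n powr (-(1 + \<alpha>)))" using assms by (subst summable_real_powr_iff) simp
  then have "summable (\<lambda>n. real (Suc n) powr (-(1 + \<alpha>)))" by (subst summable_Suc_iff)
  then show ?thesis by (simp only: powr_minus_divide)
qed


theorem mainTheorem17:
  fixes K :: "'a::polish_space \<Rightarrow> 'a measure"
    and Px :: "'a \<Rightarrow> 'a stream measure"
    and \<tau> :: "'a stream \<Rightarrow> enat"
    and u f :: "'a \<Rightarrow> real"
    and \<alpha> :: real
  assumes "markov_chain_law K Px"
    and "theta_compatible Px \<tau>"
    and "\<forall>x. (\<integral>\<^sup>+\<omega>. ennreal_of_enat (\<tau> \<omega>) \<partial>Px x) < \<infinity>"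
    and "drift_function Px \<tau> u"
    and "\<alpha> > 0"
    and "f \<in> Espace 1 Px u"
  shows "\<forall>x. (AE \<omega> in Px x. (\<lambda>n. f (\<omega> !! n) / real n powr (1 + \<alpha>)) \<longlonglongrightarrow> 0)
           \<and> (\<forall>n. integrable (Px x) (\<lambda>\<omega>. f (\<omega> !! n)))
           \<and> (\<lambda>n. \<integral>\<omega>. \<bar>f (\<omega> !! n) / real n powr (1 + \<alpha>)\<bar> \<partial>Px x) \<longlonglongrightarrow> 0"
proof
  fix x
  note mc = assms(1) and dr = assms(4) and al = assms(5)
  define W where "W = wfun Px u"
  define Bp where "Bp = max (Bconst Px u) 0"
  define p where "p = 1 + \<alpha>"
  define c where "c = (\<lambda>n::nat. 1 / real (Suc n) powr p)"
  have p0: "p > 0" using al unfolding p_def by simp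
  have W1: "\<And>y. W y \<ge> 1" unfolding W_def by (rule drift_facts(1)[OF mc dr])
  have Wm[measurable]: "W \<in> borel_measurable borel" unfolding W_def by (rule drift_facts(2)[OF mc dr])
  have W0: "\<And>y. W y \<ge> 0" using W1 by (smt (verit))
  have Bp0: "Bp \<ge> 0" unfolding Bp_def by simp
  have u1: "u x \<ge> 1" using dr unfolding drift_function_def by (elim conjE) simp
  have fm[measurable]: "f \<in> borel_measurable borel" and "\<exists>C. \<forall>y. \<bar>f y\<bar> powr 1 / W y \<le> C"
    using assms(6) unfolding Espace_def Fspace_def W_def by auto
  then obtain C where C: "\<And>y. \<bar>f y\<bar> powr 1 / W y \<le> C" by blast
  have fb: "\<bar>f y\<bar> \<le> C * W y" for y
  proof -
    have "\<bar>f y\<bar> / W y \<le> C" using C[of y] by (simp add: powr_one)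
    then show ?thesis using W1[of y] by (simp add: field_simps)
  qed
  have C0: "C \<ge> 0"
  proof -
    have "0 \<le> C * W x" by (rule order_trans[OF abs_ge_zero fb])
    then show ?thesis using W1[of x] by (simp add: zero_le_mult_iff)
  qed
  define J where "J = (\<lambda>n. \<integral>\<^sup>+\<omega>. ennreal (W (\<omega> !! n)) \<partial>Px x)"
  have Wcm: "(\<lambda>\<omega>. g (\<omega> !! n)) \<in> borel_measurable (Px x)" if "g \<in> borel_measurable borel" for g :: "'a \<Rightarrow> 'b::topological_space" and n
    by (rule comp_meas_Px[OF mc that])
  have JS: "(\<Sum>k<N. J k) \<le> ennreal (u x + real N * Bp)" for N
  proof -
    have "(\<Sum>k<N. J k) \<le> ennreal (u x) + of_nat N * ennreal Bp"
      unfolding J_def W_def Bp_def by (rule drift_facts(3)[OF mc dr])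
    also have "\<dots> = ennreal (u x + real N * Bp)"
      using u1 Bp0 by (simp add: ennreal_plus ennreal_mult ennreal_of_nat_eq_real_of_nat)
    finally show ?thesis .
  qed
  have Jle: "J n \<le> ennreal (u x + real (Suc n) * Bp)" for n
  proof -
    have "J n \<le> (\<Sum>k<Suc n. J k)" by (rule member_le_sum) auto
    then show ?thesis using JS[of "Suc n"] by (rule order_trans)
  qed
  define xr where "xr = (\<lambda>n. enn2real (J n))"
  have Jx: "J n = ennreal (xr n)" for n
    unfolding xr_def using Jle[of n] by (simp add: ennreal_enn2real_if top_unique) (metis ennreal_neq_top neq_top_trans)
  have xr0: "xr n \<ge> 0" for n unfolding xr_def by simp
  have xrS: "(\<Sum>k<N. xr k) \<le> u x + Bp * real N" for N
  proof -
    have "ennreal (\<Sum>k<N. xr k) = (\<Sum>k<N. J k)" by (simp add: Jx xr0 sum_ennreal)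
    then have "ennreal (\<Sum>k<N. xr k) \<le> ennreal (u x + real N * Bp)" using JS[of N] by simp
    then show ?thesis using u1 Bp0 by (subst (asm) ennreal_le_iff) (auto simp: mult.commute)
  qed
  have xrle: "xr n \<le> u x + real (Suc n) * Bp" for n
    using Jle[of n] u1 Bp0 unfolding Jx by (subst (asm) ennreal_le_iff) auto
  have cdec: "c (Suc n) \<le> c n" for n
    unfolding c_def using p0 by (auto intro!: divide_left_mono powr_mono2 simp: mult_pos_pos)
  have c0: "c n \<ge> 0" for n unfolding c_def by simp
  have csm: "summable c" unfolding c_def p_def by (rule csum[OF al])
  have sum_cx: "summable (\<lambda>n. c n * xr n)"
  proof (rule bounded_imp_summable)
    show "0 \<le> c n * xr n" for n using c0 xr0 by simp
    show "(\<Sum>k\<le>n. c k * xr k) \<le> u x * c 0 + Bp * suminf c" for n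
    proof -
      have "(\<Sum>k\<le>n. c k * xr k) = (\<Sum>k<Suc n. c k * xr k)" by (simp add: lessThan_Suc_atMost)
      also have "\<dots> \<le> u x * c 0 + Bp * (\<Sum>k<Suc n. c k)"
        by (rule abel[of c xr "u x" Bp, OF cdec c0 xr0 xrS])
      also have "\<dots> \<le> u x * c 0 + Bp * suminf c"
        using Bp0 by (intro add_left_mono mult_left_mono sum_le_suminf[OF csm]) (auto simp: c0)
      finally show ?thesis .
    qed
  qed
  define F where "F = (\<lambda>\<omega>. \<Sum>n. ennreal (c n * W (\<omega> !! n)))"
  have Fim: "(\<lambda>\<omega>. ennreal (c n * W (\<omega> !! n))) \<in> borel_measurable (Px x)" for n
    using Wcm[of "\<lambda>y. ennreal (c n * W y)" n] by measurable
  have Fm: "F \<in> borel_measurable (Px x)" unfolding F_def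
    by (rule borel_measurable_suminf_order[OF Fim])
  have "(\<integral>\<^sup>+\<omega>. F \<omega> \<partial>Px x) = (\<Sum>n. \<integral>\<^sup>+\<omega>. ennreal (c n * W (\<omega> !! n)) \<partial>Px x)"
    unfolding F_def by (rule nn_integral_suminf[OF Fim])
  also have "\<dots> = (\<Sum>n. ennreal (c n * xr n))"
  proof (rule suminf_cong)
    fix n
    have "(\<integral>\<^sup>+\<omega>. ennreal (c n * W (\<omega> !! n)) \<partial>Px x) = (\<integral>\<^sup>+\<omega>. ennreal (c n) * ennreal (W (\<omega> !! n)) \<partial>Px x)"
      using c0 W0 by (intro nn_integral_cong) (simp add: ennreal_mult)
    also have "\<dots> = ennreal (c n) * J n" unfolding J_def
      by (rule nn_integral_cmult) (rule Wcm[of "\<lambda>y. ennreal (W y)"], measurable)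
    also have "\<dots> = ennreal (c n * xr n)" using c0 xr0 by (simp add: Jx ennreal_mult)
    finally show "(\<integral>\<^sup>+\<omega>. ennreal (c n * W (\<omega> !! n)) \<partial>Px x) = ennreal (c n * xr n)" .
  qed
  finally have Feq: "(\<integral>\<^sup>+\<omega>. F \<omega> \<partial>Px x) = (\<Sum>n. ennreal (c n * xr n))" .
  have "(\<integral>\<^sup>+\<omega>. F \<omega> \<partial>Px x) \<noteq> \<infinity>"
    unfolding Feq infinity_ennreal_def by (rule ennreal_suminf_neq_top[OF sum_cx mult_nonneg_nonneg[OF c0 xr0]])
  then have AEF: "AE \<omega> in Px x. F \<omega> \<noteq> \<infinity>" by (rule nn_integral_PInf_AE[OF Fm])
  have asp: "AE \<omega> in Px x. (\<lambda>n. f (\<omega> !! n) / real n powr (1 + \<alpha>)) \<longlonglongrightarrow> 0"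
    using AEF
  proof eventually_elim
    case (elim \<omega>)
    have "summable (\<lambda>n. c n * W (\<omega> !! n))"
      by (rule summable_suminf_not_top) (use elim c0 W1 in \<open>auto simp: F_def intro: mult_nonneg_nonneg order_trans[OF zero_le_one]\<close>)
    then have lim: "(\<lambda>n. c n * W (\<omega> !! n)) \<longlonglongrightarrow> 0" by (rule summable_LIMSEQ_zero)
    show ?case
    proof (rule Lim_null_comparison)
      show "(\<lambda>n. C * 2 powr p * (c n * W (\<omega> !! n))) \<longlonglongrightarrow> 0"
        using tendsto_mult_right_zero[OF lim, of "C * 2 powr p"] by simp
      show "\<forall>\<^sub>F n in sequentially. norm (f (\<omega> !! n) / real n powr (1 + \<alpha>)) \<le> C * 2 powr p * (c n * W (\<omega> !! n))"
        using eventually_ge_at_top[of 1]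
      proof eventually_elim
        case (elim n)
        have "norm (f (\<omega> !! n) / real n powr p) = \<bar>f (\<omega> !! n)\<bar> * (1 / real n powr p)"
          by (simp add: abs_divide)
        also have "\<dots> \<le> (C * W (\<omega> !! n)) * (2 powr p * c n)"
          using fb powr_cmp[OF p0 elim] C0 W0 unfolding c_def
          by (intro mult_mono) auto
        finally show ?case unfolding p_def by (simp add: algebra_simps)
      qed
    qed
  qed
  have fn_nn: "(\<integral>\<^sup>+\<omega>. ennreal (norm (f (\<omega> !! n))) \<partial>Px x) \<le> ennreal (C * xr n)" for n
  proof -
    have "(\<integral>\<^sup>+\<omega>. ennreal (norm (f (\<omega> !! n))) \<partial>Px x) \<le> (\<integral>\<^sup>+\<omega>. ennreal C * ennreal (W (\<omega> !! n)) \<partial>Px x)"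
      by (rule nn_integral_mono) (use fb C0 W0 in \<open>auto simp: ennreal_mult[symmetric] intro!: ennreal_leI\<close>)
    also have "\<dots> = ennreal C * J n" unfolding J_def
      by (rule nn_integral_cmult) (rule Wcm[of "\<lambda>y. ennreal (W y)"], measurable)
    also have "\<dots> = ennreal (C * xr n)" using C0 xr0 by (simp add: Jx ennreal_mult)
    finally show ?thesis .
  qed
  have integ: "integrable (Px x) (\<lambda>\<omega>. f (\<omega> !! n))" for n
    by (rule integrableI_bounded[OF Wcm[OF fm]]) (use fn_nn[of n] in \<open>auto simp: order_le_less_trans\<close>)
  have L1: "(\<lambda>n. \<integral>\<omega>. \<bar>f (\<omega> !! n) / real n powr (1 + \<alpha>)\<bar> \<partial>Px x) \<longlonglongrightarrow> 0"
  proof (rule Lim_null_comparison)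
    show "(\<lambda>n. C * (u x + real (Suc n) * Bp) / real n powr (1 + \<alpha>)) \<longlonglongrightarrow> 0"
      by (rule lim_aux[OF al])
    show "\<forall>\<^sub>F n in sequentially. norm (\<integral>\<omega>. \<bar>f (\<omega> !! n) / real n powr (1 + \<alpha>)\<bar> \<partial>Px x)
            \<le> C * (u x + real (Suc n) * Bp) / real n powr (1 + \<alpha>)"
    proof (rule always_eventually, rule allI)
      fix n
      have I0: "(\<integral>\<omega>. \<bar>f (\<omega> !! n)\<bar> \<partial>Px x) \<ge> 0" by simp
      have "(\<integral>\<omega>. \<bar>f (\<omega> !! n)\<bar> \<partial>Px x) = enn2real (\<integral>\<^sup>+\<omega>. ennreal (\<bar>f (\<omega> !! n)\<bar>) \<partial>Px x)"
        by (rule integral_eq_nn_integral) (use Wcm[OF fm, of n] in auto)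
      also have "\<dots> \<le> enn2real (ennreal (C * xr n))"
        by (rule enn2real_mono) (use fn_nn[of n] in auto)
      also have "\<dots> = C * xr n" using C0 xr0 by simp
      also have "\<dots> \<le> C * (u x + real (Suc n) * Bp)" by (rule mult_left_mono[OF xrle C0])
      finally have I1: "(\<integral>\<omega>. \<bar>f (\<omega> !! n)\<bar> \<partial>Px x) \<le> C * (u x + real (Suc n) * Bp)" .
      have "norm (\<integral>\<omega>. \<bar>f (\<omega> !! n) / real n powr (1 + \<alpha>)\<bar> \<partial>Px x) = (\<integral>\<omega>. \<bar>f (\<omega> !! n)\<bar> \<partial>Px x) / real n powr (1 + \<alpha>)"
        using I0 by (simp add: abs_divide)
      also have "\<dots> \<le> C * (u x + real (Suc n) * Bp) / real n powr (1 + \<alpha>)"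
        by (rule divide_right_mono[OF I1]) simp
      finally show "norm (\<integral>\<omega>. \<bar>f (\<omega> !! n) / real n powr (1 + \<alpha>)\<bar> \<partial>Px x) \<le> C * (u x + real (Suc n) * Bp) / real n powr (1 + \<alpha>)" .
    qed
  qed
  show "(AE \<omega> in Px x. (\<lambda>n. f (\<omega> !! n) / real n powr (1 + \<alpha>)) \<longlonglongrightarrow> 0)
           \<and> (\<forall>n. integrable (Px x) (\<lambda>\<omega>. f (\<omega> !! n)))
           \<and> (\<lambda>n. \<integral>\<omega>. \<bar>f (\<omega> !! n) / real n powr (1 + \<alpha>)\<bar> \<partial>Px x) \<longlonglongrightarrow> 0"
    using asp integ L1 by blast
qed

end
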